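(* Let $A$ be an operator algebra which has a right contractive approximate identity $\{e_\alpha\}$ and also has a right identity. Then $A$ has a right identity of norm $1$, and it is the norm limit of $\{e_\alpha\}$.
   Context: An operator algebra is a (complete) algebra with matrix norms completely isometrically isomorphic, via a homomorphism, to a closed subalgebra of some $B(H)$. A right contractive approximate identity is a net $\{e_\alpha\}$ in the unit ball with $ae_\alpha\to a$ for all $a\in A$; a right identity is an element $e$ with $ae=a$ for all $a\in A$. *)

theory Defs
  imports "HOL-Analysis.Analysis"
begin

text \<open>A complex Hilbert space is modelled as a real Hilbert space 'h together with
 an orthogonal complex structure J (multiplication by i): J o J = -1 and J preserves
 the real inner product.  Bounded complex-linear operators are exactly the bounded
 real-linear operators commuting with J; the operator norm is the same.\<close>

definition complex_structure :: "('h::{real_inner,complete_space} \<Rightarrow>\<^sub>L 'h) \<Rightarrow> bool" where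
  "complex_structure J \<longleftrightarrow> (\<forall>x. J (J x) = - x) \<and> (\<forall>x y. inner (J x) (J y) = inner x y)"

definition complex_linear_op :: "('h::{real_inner,complete_space} \<Rightarrow>\<^sub>L 'h) \<Rightarrow> ('h \<Rightarrow>\<^sub>L 'h) \<Rightarrow> bool" where
  "complex_linear_op J T \<longleftrightarrow> T o\<^sub>L J = J o\<^sub>L T"

definition operator_algebra :: "('h::{real_inner,complete_space} \<Rightarrow>\<^sub>L 'h) \<Rightarrow> ('h \<Rightarrow>\<^sub>L 'h) set \<Rightarrow> bool" where
  "operator_algebra J A \<longleftrightarrow>
     complex_structure J \<and>
     (\<forall>T\<in>A. complex_linear_op J T) \<and>
     0 \<in> A \<and>
     (\<forall>S\<in>A. \<forall>T\<in>A. S + T \<in> A) \<and>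
     (\<forall>r::real. \<forall>T\<in>A. r *\<^sub>R T \<in> A) \<and>
     (\<forall>T\<in>A. J o\<^sub>L T \<in> A) \<and>
     (\<forall>S\<in>A. \<forall>T\<in>A. S o\<^sub>L T \<in> A) \<and>
     closed A"

definition directed_set :: "'i set \<Rightarrow> ('i \<Rightarrow> 'i \<Rightarrow> bool) \<Rightarrow> bool" where
  "directed_set I le \<longleftrightarrow> I \<noteq> {} \<and> (\<forall>a\<in>I. le a a) \<and>
     (\<forall>a\<in>I. \<forall>b\<in>I. \<forall>c\<in>I. le a b \<longrightarrow> le b c \<longrightarrow> le a c) \<and>
     (\<forall>a\<in>I. \<forall>b\<in>I. \<exists>c\<in>I. le a c \<and> le b c)"

definition net_tendsto :: "'i set \<Rightarrow> ('i \<Rightarrow> 'i \<Rightarrow> bool) \<Rightarrow> ('i \<Rightarrow> 'a::metric_space) \<Rightarrow> 'a \<Rightarrow> bool" where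
  "net_tendsto I le x l \<longleftrightarrow> (\<forall>\<epsilon>>0. \<exists>a\<in>I. \<forall>b\<in>I. le a b \<longrightarrow> dist (x b) l < \<epsilon>)"

definition right_identity :: "('h::{real_inner,complete_space} \<Rightarrow>\<^sub>L 'h) set \<Rightarrow> ('h \<Rightarrow>\<^sub>L 'h) \<Rightarrow> bool" where
  "right_identity A e \<longleftrightarrow> e \<in> A \<and> (\<forall>a\<in>A. a o\<^sub>L e = a)"

definition right_cai :: "('h::{real_inner,complete_space} \<Rightarrow>\<^sub>L 'h) set \<Rightarrow> 'i set \<Rightarrow> ('i \<Rightarrow> 'i \<Rightarrow> bool)
    \<Rightarrow> ('i \<Rightarrow> ('h \<Rightarrow>\<^sub>L 'h)) \<Rightarrow> bool" where
  "right_cai A I le e \<longleftrightarrow> directed_set I le \<and> (\<forall>i\<in>I. e i \<in> A \<and> norm (e i) \<le> 1) \<and>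
     (\<forall>a\<in>A. net_tendsto I le (\<lambda>i. a o\<^sub>L e i) a)"

end

theory Submission
  imports Defs
begin

lemma parallelogram_aux:
  fixes u v :: "'a::real_inner"
  shows "(norm (u - v))\<^sup>2 = 2 * (norm u)\<^sup>2 + 2 * (norm v)\<^sup>2 - (norm (u + v))\<^sup>2"
  by (simp add: power2_norm_eq_inner inner_simps inner_commute)

lemma half_aux:
  fixes p q y :: "'a::real_vector"
  shows "(p + q) /\<^sub>R 2 - y = ((p - y) + (q - y)) /\<^sub>R 2"
proof -
  have "y = (y + y) /\<^sub>R 2" by (simp add: scaleR_2[symmetric])
  then have "(p + q) /\<^sub>R 2 - y = (p + q) /\<^sub>R 2 - (y + y) /\<^sub>R 2" by simp
  also have "\<dots> = ((p - y) + (q - y)) /\<^sub>R 2" by (simp only: scaleR_diff_right[symmetric]) (simp add: algebra_simps)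
  finally show ?thesis .
qed

lemma key_pointwise:
  fixes f a b :: "'h::real_inner \<Rightarrow>\<^sub>L 'h"
  assumes ff: "f o\<^sub>L f = f" and af: "a o\<^sub>L f = a" and bf: "b o\<^sub>L f = b"
    and na: "norm a \<le> 1" and nb: "norm b \<le> 1"
  shows "(norm (a x - b x))\<^sup>2 \<le> 4 * (norm ((f o\<^sub>L a) - f) + norm ((f o\<^sub>L b) - f)) * (norm x)\<^sup>2"
proof -
  define K where "K = {k. f k = 0}"
  define d where "d = infdist x K"
  have K0: "0 \<in> K" unfolding K_def by simp
  have fff: "\<And>y. f (f y) = f y" using ff by (metis blinfun_apply_blinfun_compose)
  have upper: "norm (c x) \<le> d" if cf: "c o\<^sub>L f = c" and nc: "norm c \<le> 1" for c :: "'h \<Rightarrow>\<^sub>L 'h"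
  proof -
    have "\<forall>k\<in>K. norm (c x) \<le> dist x k"
    proof
      fix k assume "k \<in> K"
      then have fk: "f k = 0" by (simp add: K_def)
      have "c x = c (f x)" using cf by (metis blinfun_apply_blinfun_compose)
      also have "f x = f (x - k)" using fk by (simp add: blinfun.diff_right)
      also have "c (f (x - k)) = c (x - k)" using cf by (metis blinfun_apply_blinfun_compose)
      finally have "c x = c (x - k)" .
      then have "norm (c x) \<le> norm c * norm (x - k)" by (metis norm_blinfun)
      also have "\<dots> \<le> norm (x - k)" using nc by (simp add: mult_left_le_one_le)
      finally show "norm (c x) \<le> dist x k" by (simp add: dist_norm)
    qed
    then show ?thesis unfolding d_def using K0
      by (subst infdist_notempty) (auto intro!: cINF_greatest)
  qed
  have ua: "norm (a x) \<le> d" using upper af na by blast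
  have ub: "norm (b x) \<le> d" using upper bf nb by blast
  have d0: "0 \<le> d" unfolding d_def by (rule infdist_nonneg)
  have dx: "d \<le> norm x" unfolding d_def using infdist_le[OF K0, of x] by simp
  define s where "s = (norm ((f o\<^sub>L a) - f) + norm ((f o\<^sub>L b) - f)) / 2"
  define t where "t = s * norm x"
  have s0: "0 \<le> s" unfolding s_def by simp
  define m where "m = (a x + b x) /\<^sub>R 2 - x"
  have fm: "f m = (((f o\<^sub>L a) - f) x + ((f o\<^sub>L b) - f) x) /\<^sub>R 2"
    proof -
    have "f m = (f (a x) + f (b x)) /\<^sub>R 2 - f x"
      unfolding m_def by (simp add: blinfun.bilinear_simps)
    also have "\<dots> = ((f (a x) - f x) + (f (b x) - f x)) /\<^sub>R 2"
      by (rule half_aux)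
    also have "\<dots> = (((f o\<^sub>L a) - f) x + ((f o\<^sub>L b) - f) x) /\<^sub>R 2"
      by (simp only: blinfun.diff_left blinfun_apply_blinfun_compose)
    finally show ?thesis .
  qed
  have nfm: "norm (f m) \<le> t"
  proof -
    have "norm (f m) \<le> (norm (((f o\<^sub>L a) - f) x) + norm (((f o\<^sub>L b) - f) x)) / 2"
      unfolding fm using norm_triangle_ineq[of "((f o\<^sub>L a) - f) x" "((f o\<^sub>L b) - f) x"] by simp
    also have "\<dots> \<le> (norm ((f o\<^sub>L a) - f) * norm x + norm ((f o\<^sub>L b) - f) * norm x) / 2"
      using norm_blinfun[of "(f o\<^sub>L a) - f" x] norm_blinfun[of "(f o\<^sub>L b) - f" x] by simp
    finally show ?thesis unfolding t_def s_def by (simp add: algebra_simps)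
  qed
  define k0 where "k0 = f m - m"
  have k0K: "k0 \<in> K" unfolding K_def k0_def by (simp add: blinfun.diff_right fff)
  have "d \<le> dist x k0" unfolding d_def by (rule infdist_le[OF k0K])
  also have "dist x k0 = norm ((a x + b x) /\<^sub>R 2 - f m)"
    unfolding dist_norm k0_def m_def by (simp add: algebra_simps)
  also have "\<dots> \<le> norm ((a x + b x) /\<^sub>R 2) + norm (f m)" by (rule norm_triangle_ineq4)
  finally have lower: "d - t \<le> norm (a x + b x) / 2" using nfm by simp
  have sq: "(norm (a x - b x))\<^sup>2 = 2 * (norm (a x))\<^sup>2 + 2 * (norm (b x))\<^sup>2 - (norm (a x + b x))\<^sup>2"
    by (rule parallelogram_aux)
  have a2: "(norm (a x))\<^sup>2 \<le> d\<^sup>2" using ua by (simp add: power_mono)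
  have b2: "(norm (b x))\<^sup>2 \<le> d\<^sup>2" using ub by (simp add: power_mono)
  have t0: "0 \<le> t" unfolding t_def using s0 by simp
  have main: "(norm (a x - b x))\<^sup>2 \<le> 8 * (t * d)"
  proof (cases "t \<le> d")
    case True
    then have h1: "(2 * (d - t))\<^sup>2 \<le> (norm (a x + b x))\<^sup>2"
      using lower by (intro power_mono) auto
    have h: "(2 * (d - t))\<^sup>2 = 4 * d\<^sup>2 - 8 * (t * d) + 4 * t\<^sup>2"
      by (simp add: power2_eq_square algebra_simps)
    have "0 \<le> t\<^sup>2" by simp
    then show ?thesis using sq a2 b2 h h1 by linarith
  next
    case False
    then have h1: "d * d \<le> t * d" using d0 by (simp add: mult_right_mono)
    have h2: "d\<^sup>2 = d * d" by (simp add: power2_eq_square)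
    have h3: "0 \<le> t * d" using t0 d0 by simp
    have "0 \<le> (norm (a x + b x))\<^sup>2" by simp
    then show ?thesis using sq a2 b2 h1 h2 h3 by linarith
  qed
  also have "8 * (t * d) \<le> 8 * (t * norm x)" using dx t0 by (simp add: mult_left_mono)
  also have "\<dots> = 4 * (norm ((f o\<^sub>L a) - f) + norm ((f o\<^sub>L b) - f)) * (norm x)\<^sup>2"
    unfolding t_def s_def by (simp add: power2_eq_square)
  finally show ?thesis .
qed
lemma key:
  fixes f a b :: "'h::real_inner \<Rightarrow>\<^sub>L 'h"
  assumes "f o\<^sub>L f = f" "a o\<^sub>L f = a" "b o\<^sub>L f = b" "norm a \<le> 1" "norm b \<le> 1"
  shows "norm (a - b) \<le> sqrt (4 * (norm ((f o\<^sub>L a) - f) + norm ((f o\<^sub>L b) - f)))"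
proof (rule norm_blinfun_bound)
  show "0 \<le> sqrt (4 * (norm ((f o\<^sub>L a) - f) + norm ((f o\<^sub>L b) - f)))" by simp
  fix x
  have "(norm ((a - b) x))\<^sup>2 \<le> 4 * (norm ((f o\<^sub>L a) - f) + norm ((f o\<^sub>L b) - f)) * (norm x)\<^sup>2"
    using key_pointwise[OF assms, of x] by (simp add: blinfun.diff_left)
  then have "sqrt ((norm ((a - b) x))\<^sup>2) \<le> sqrt (4 * (norm ((f o\<^sub>L a) - f) + norm ((f o\<^sub>L b) - f)) * (norm x)\<^sup>2)"
    by (rule real_sqrt_le_mono)
  then show "norm ((a - b) x) \<le> sqrt (4 * (norm ((f o\<^sub>L a) - f) + norm ((f o\<^sub>L b) - f))) * norm x"
    by (simp add: real_sqrt_mult)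
qed


lemma dir_refl: "directed_set I le \<Longrightarrow> a \<in> I \<Longrightarrow> le a a"
  unfolding directed_set_def by blast

lemma dir_trans: "directed_set I le \<Longrightarrow> a \<in> I \<Longrightarrow> b \<in> I \<Longrightarrow> c \<in> I \<Longrightarrow> le a b \<Longrightarrow> le b c \<Longrightarrow> le a c"
  unfolding directed_set_def by blast

lemma dir_ub: "directed_set I le \<Longrightarrow> a \<in> I \<Longrightarrow> b \<in> I \<Longrightarrow> \<exists>c\<in>I. le a c \<and> le b c"
  unfolding directed_set_def by blast

lemma dir_ne: "directed_set I le \<Longrightarrow> \<exists>a. a \<in> I"
  unfolding directed_set_def by blast

definition netF :: "'i set \<Rightarrow> ('i \<Rightarrow> 'i \<Rightarrow> bool) \<Rightarrow> 'i filter" where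
  "netF I le = (INF a\<in>I. principal {b\<in>I. le a b})"

lemma eventually_netF:
  assumes "directed_set I le"
  shows "eventually P (netF I le) \<longleftrightarrow> (\<exists>a\<in>I. \<forall>b\<in>I. le a b \<longrightarrow> P b)"
proof -
  have ne: "I \<noteq> {}" using assms by (simp add: directed_set_def)
  have dir: "\<forall>a\<in>I. \<forall>b\<in>I. \<exists>x\<in>I. principal {c\<in>I. le x c} \<le> inf (principal {c\<in>I. le a c}) (principal {c\<in>I. le b c})"
  proof (intro ballI)
    fix a b assume "a \<in> I" "b \<in> I"
    then obtain c where c: "c \<in> I" "le a c" "le b c" using dir_ub[OF assms] by blast
    have "{d\<in>I. le c d} \<subseteq> {d\<in>I. le a d} \<inter> {d\<in>I. le b d}"
      using c dir_trans[OF assms _ c(1)] \<open>a \<in> I\<close> \<open>b \<in> I\<close> by blast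
    then show "\<exists>x\<in>I. principal {c\<in>I. le x c} \<le> inf (principal {c\<in>I. le a c}) (principal {c\<in>I. le b c})"
      using c by (intro bexI[of _ c]) auto
  qed
  show ?thesis unfolding netF_def
    by (subst eventually_INF_base[OF ne dir[rule_format]]) (auto simp: eventually_principal)
qed

lemma netF_not_bot:
  assumes "directed_set I le"
  shows "netF I le \<noteq> bot"
proof
  assume "netF I le = bot"
  then have "eventually (\<lambda>_. False) (netF I le)" by simp
  then have "\<exists>a\<in>I. \<forall>b\<in>I. le a b \<longrightarrow> False" by (simp only: eventually_netF[OF assms])
  then obtain a where "a \<in> I" "\<forall>b\<in>I. le a b \<longrightarrow> False" by blast
  then show False using dir_refl[OF assms] by blast
qed

lemma net_tendsto_iff:
  assumes "directed_set I le"
  shows "net_tendsto I le x l \<longleftrightarrow> (x \<longlongrightarrow> l) (netF I le)"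
  unfolding net_tendsto_def tendsto_iff eventually_netF[OF assms] by blast

lemma net_cauchy_converges:
  fixes x :: "'i \<Rightarrow> 'a::complete_space"
  assumes d: "directed_set I le"
    and c: "\<forall>\<epsilon>>0. \<exists>a\<in>I. \<forall>b\<in>I. \<forall>c\<in>I. le a b \<longrightarrow> le a c \<longrightarrow> dist (x b) (x c) < \<epsilon>"
  shows "\<exists>l. net_tendsto I le x l"
proof -
  have "cauchy_filter (filtermap x (netF I le))"
  proof (subst cauchy_filter_metric_filtermap, intro allI impI)
    fix e :: real assume "e > 0"
    then obtain a where a: "a \<in> I" "\<forall>b\<in>I. \<forall>c\<in>I. le a b \<longrightarrow> le a c \<longrightarrow> dist (x b) (x c) < e"
      using c by blast
    show "\<exists>P. eventually P (netF I le) \<and> (\<forall>y z. P y \<and> P z \<longrightarrow> dist (x y) (x z) < e)"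
      by (rule exI[of _ "\<lambda>b. b \<in> I \<and> le a b"]) (use a in \<open>auto simp: eventually_netF[OF d]\<close>)
  qed
  then obtain l where "filtermap x (netF I le) \<le> nhds l"
    using cauchy_filter_complete_converges[of "filtermap x (netF I le)" UNIV] complete_UNIV
      netF_not_bot[OF d] by (auto simp: filtermap_bot_iff)
  then show ?thesis using net_tendsto_iff[OF d] by (auto simp: filterlim_def)
qed

lemma blinfun_net_converges:
  fixes e :: "'i \<Rightarrow> ('a::real_normed_vector \<Rightarrow>\<^sub>L 'b::{real_normed_vector,complete_space})"
  assumes d: "directed_set I le"
    and c: "\<forall>\<epsilon>>0. \<exists>a\<in>I. \<forall>b\<in>I. \<forall>c\<in>I. le a b \<longrightarrow> le a c \<longrightarrow> dist (e b) (e c) < \<epsilon>"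
  shows "\<exists>u. net_tendsto I le e u"
proof -
  have nb: "netF I le \<noteq> bot" by (rule netF_not_bot[OF d])
  have pw: "\<exists>l. net_tendsto I le (\<lambda>i. e i x) l" for x
  proof (rule net_cauchy_converges[OF d], intro allI impI)
    fix \<epsilon> :: real assume "\<epsilon> > 0"
    then have "\<epsilon> / (norm x + 1) > 0" using norm_ge_zero[of x] by (intro divide_pos_pos) linarith+
    then obtain a where a: "a \<in> I" "\<forall>b\<in>I. \<forall>c\<in>I. le a b \<longrightarrow> le a c \<longrightarrow> dist (e b) (e c) < \<epsilon> / (norm x + 1)"
      using c by blast
    show "\<exists>a\<in>I. \<forall>b\<in>I. \<forall>c\<in>I. le a b \<longrightarrow> le a c \<longrightarrow> dist (e b x) (e c x) < \<epsilon>"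
    proof (intro bexI[OF _ a(1)] ballI impI)
      fix b c assume bc: "b \<in> I" "c \<in> I" "le a b" "le a c"
      have "dist (e b x) (e c x) = norm ((e b - e c) x)" by (simp add: dist_norm blinfun.diff_left)
      also have "\<dots> \<le> norm (e b - e c) * norm x" by (rule norm_blinfun)
      also have "\<dots> \<le> \<epsilon> / (norm x + 1) * norm x"
        using a bc by (intro mult_right_mono) (auto simp: dist_norm less_imp_le)
      also have "\<dots> < \<epsilon>"
      proof -
        have "\<epsilon> * norm x < \<epsilon> * (norm x + 1)" using \<open>\<epsilon> > 0\<close> by simp
        moreover have p: "norm x + 1 > 0" using norm_ge_zero[of x] by linarith
        ultimately have "(\<epsilon> * norm x) / (norm x + 1) < \<epsilon>" by (simp only: pos_divide_less_eq[OF p])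
        moreover have "\<epsilon> / (norm x + 1) * norm x = (\<epsilon> * norm x) / (norm x + 1)" by simp
        ultimately show ?thesis by simp
      qed
      finally show "dist (e b x) (e c x) < \<epsilon>" .
    qed
  qed
  then obtain v where v: "\<And>x. net_tendsto I le (\<lambda>i. e i x) (v x)" by metis
  have vF: "((\<lambda>i. e i x) \<longlongrightarrow> v x) (netF I le)" for x using v net_tendsto_iff[OF d] by blast
  obtain a0 where a0: "a0 \<in> I" "\<forall>b\<in>I. \<forall>c\<in>I. le a0 b \<longrightarrow> le a0 c \<longrightarrow> dist (e b) (e c) < 1"
    using c by (meson zero_less_one)
  define K where "K = norm (e a0) + 1"
  have ev_ge: "eventually (\<lambda>i. i \<in> I \<and> le a i) (netF I le)" if "a \<in> I" for a
    using that unfolding eventually_netF[OF d] by blast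
  have lin: "bounded_linear v"
  proof (rule bounded_linear_intro[where K=K])
    fix x y
    have "((\<lambda>i. e i x + e i y) \<longlongrightarrow> v x + v y) (netF I le)" by (intro tendsto_add vF)
    then have "((\<lambda>i. e i (x + y)) \<longlongrightarrow> v x + v y) (netF I le)" by (simp add: blinfun.add_right)
    then show "v (x + y) = v x + v y" using tendsto_unique[OF nb vF] by blast
  next
    fix r x
    have "((\<lambda>i. r *\<^sub>R e i x) \<longlongrightarrow> r *\<^sub>R v x) (netF I le)" by (intro tendsto_scaleR tendsto_const vF)
    then have "((\<lambda>i. e i (r *\<^sub>R x)) \<longlongrightarrow> r *\<^sub>R v x) (netF I le)" by (simp add: blinfun.scaleR_right)
    then show "v (r *\<^sub>R x) = r *\<^sub>R v x" using tendsto_unique[OF nb vF] by blast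
  next
    fix x
    have "eventually (\<lambda>i. norm (e i x) \<le> norm x * K) (netF I le)"
      using ev_ge[OF a0(1)]
    proof (rule eventually_mono)
      fix i assume i: "i \<in> I \<and> le a0 i"
      have "norm (e i) \<le> norm (e a0) + norm (e i - e a0)" using norm_triangle_ineq[of "e a0" "e i - e a0"] by simp
      also have "norm (e i - e a0) < 1"
      proof -
        have "le a0 a0" by (rule dir_refl[OF d a0(1)])
        then have "dist (e i) (e a0) < 1" using a0 i by blast
        then show ?thesis by (simp add: dist_norm)
      qed
      finally have eK: "norm (e i) \<le> K" unfolding K_def by simp
      have h1: "norm (e i x) \<le> norm (e i) * norm x" by (rule norm_blinfun)
      have h2: "norm (e i) * norm x \<le> K * norm x" using eK by (rule mult_right_mono) simp
      have h3: "K * norm x = norm x * K" by simp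
      show "norm (e i x) \<le> norm x * K" using h1 h2 h3 by linarith
    qed
    then show "norm (v x) \<le> norm x * K"
      by (rule tendsto_upperbound[OF tendsto_norm[OF vF] _ nb])
  qed
  define u where "u = Blinfun v"
  have uv: "blinfun_apply u = v" unfolding u_def by (rule bounded_linear_Blinfun_apply[OF lin])
  have "net_tendsto I le e u"
    unfolding net_tendsto_def
  proof (intro allI impI)
    fix \<epsilon> :: real assume "\<epsilon> > 0"
    then obtain a where a: "a \<in> I" "\<forall>b\<in>I. \<forall>c\<in>I. le a b \<longrightarrow> le a c \<longrightarrow> dist (e b) (e c) < \<epsilon> / 2"
      using c by (meson half_gt_zero)
    show "\<exists>a\<in>I. \<forall>b\<in>I. le a b \<longrightarrow> dist (e b) u < \<epsilon>"
    proof (intro bexI[OF _ a(1)] ballI impI)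
      fix b assume b: "b \<in> I" "le a b"
      have "norm (e b - u) \<le> \<epsilon> / 2"
      proof (rule norm_blinfun_bound)
        show "0 \<le> \<epsilon> / 2" using \<open>\<epsilon> > 0\<close> by simp
        fix x
        have lim: "((\<lambda>c. norm (e b x - e c x)) \<longlongrightarrow> norm (e b x - v x)) (netF I le)"
          by (intro tendsto_norm tendsto_diff tendsto_const vF)
        have "eventually (\<lambda>c. norm (e b x - e c x) \<le> \<epsilon> / 2 * norm x) (netF I le)"
          using ev_ge[OF a(1)]
        proof (rule eventually_mono)
          fix c assume c: "c \<in> I \<and> le a c"
          have "norm (e b x - e c x) = norm ((e b - e c) x)" by (simp add: blinfun.diff_left)
          also have "\<dots> \<le> norm (e b - e c) * norm x" by (rule norm_blinfun)
          also have "\<dots> \<le> \<epsilon> / 2 * norm x"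
            using a b c by (intro mult_right_mono) (auto simp: dist_norm less_imp_le)
          finally show "norm (e b x - e c x) \<le> \<epsilon> / 2 * norm x" .
        qed
        then have "norm (e b x - v x) \<le> \<epsilon> / 2 * norm x"
          by (rule tendsto_upperbound[OF lim _ nb])
        then show "norm ((e b - u) x) \<le> \<epsilon> / 2 * norm x" by (simp add: blinfun.diff_left uv)
      qed
      then show "dist (e b) u < \<epsilon>" using \<open>\<epsilon> > 0\<close> by (simp add: dist_norm)
    qed
  qed
  then show ?thesis by blast
qed

theorem corollary2p21:
  fixes J :: "'h::{real_inner,complete_space} \<Rightarrow>\<^sub>L 'h"
    and A :: "('h \<Rightarrow>\<^sub>L 'h) set"
    and I :: "'i set" and le :: "'i \<Rightarrow> 'i \<Rightarrow> bool" and e :: "'i \<Rightarrow> ('h \<Rightarrow>\<^sub>L 'h)"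
  assumes "operator_algebra J A"
    and "A \<noteq> {0}"
    and "right_cai A I le e"
    and "\<exists>f. right_identity A f"
  shows "\<exists>u. right_identity A u \<and> norm u = 1 \<and> net_tendsto I le e u"
proof -
  obtain f where f: "f \<in> A" "\<forall>a\<in>A. a o\<^sub>L f = a"
    using assms(4) by (auto simp: right_identity_def)
  have d: "directed_set I le" and eA: "\<forall>i\<in>I. e i \<in> A \<and> norm (e i) \<le> 1"
    and conv: "\<forall>a\<in>A. net_tendsto I le (\<lambda>i. a o\<^sub>L e i) a"
    using assms(3) by (auto simp: right_cai_def)
  have clA: "closed A" and mulA: "\<forall>S\<in>A. \<forall>T\<in>A. S o\<^sub>L T \<in> A"
    using assms(1) by (auto simp: operator_algebra_def)
  have ff: "f o\<^sub>L f = f" using f by blast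
  have fconv: "net_tendsto I le (\<lambda>i. f o\<^sub>L e i) f" using conv f by blast
  have cauchy: "\<forall>\<epsilon>>0. \<exists>a\<in>I. \<forall>b\<in>I. \<forall>c\<in>I. le a b \<longrightarrow> le a c \<longrightarrow> dist (e b) (e c) < \<epsilon>"
  proof (intro allI impI)
    fix \<epsilon> :: real assume "\<epsilon> > 0"
    then have "\<epsilon>\<^sup>2 / 8 > 0" by simp
    then obtain a where a: "a \<in> I" "\<forall>b\<in>I. le a b \<longrightarrow> dist (f o\<^sub>L e b) f < \<epsilon>\<^sup>2 / 8"
      using fconv unfolding net_tendsto_def by blast
    show "\<exists>a\<in>I. \<forall>b\<in>I. \<forall>c\<in>I. le a b \<longrightarrow> le a c \<longrightarrow> dist (e b) (e c) < \<epsilon>"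
    proof (intro bexI[OF _ a(1)] ballI impI)
      fix b c assume bc: "b \<in> I" "c \<in> I" "le a b" "le a c"
      have nb: "norm ((f o\<^sub>L e b) - f) < \<epsilon>\<^sup>2 / 8" using a bc by (simp add: dist_norm)
      have nc: "norm ((f o\<^sub>L e c) - f) < \<epsilon>\<^sup>2 / 8" using a bc by (simp add: dist_norm)
      have "dist (e b) (e c) = norm (e b - e c)" by (simp add: dist_norm)
      also have "\<dots> \<le> sqrt (4 * (norm ((f o\<^sub>L e b) - f) + norm ((f o\<^sub>L e c) - f)))"
        using key[OF ff, of "e b" "e c"] eA f bc by auto
      also have "\<dots> < sqrt (\<epsilon>\<^sup>2)"
        using nb nc by (intro real_sqrt_less_mono) simp
      also have "\<dots> = \<epsilon>" using \<open>\<epsilon> > 0\<close> by simp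
      finally show "dist (e b) (e c) < \<epsilon>" .
    qed
  qed
  obtain u where u: "net_tendsto I le e u" using blinfun_net_converges[OF d cauchy] by blast
  have uF: "(e \<longlongrightarrow> u) (netF I le)" using u net_tendsto_iff[OF d] by blast
  have nb: "netF I le \<noteq> bot" by (rule netF_not_bot[OF d])
  have evA: "eventually (\<lambda>i. e i \<in> A) (netF I le)"
    using eA dir_ne[OF d] unfolding eventually_netF[OF d] by blast
  have evN: "eventually (\<lambda>i. norm (e i) \<le> 1) (netF I le)"
    using eA dir_ne[OF d] unfolding eventually_netF[OF d] by blast
  have uA: "u \<in> A" by (rule Lim_in_closed_set[OF clA evA nb uF])
  have ru: "a o\<^sub>L u = a" if "a \<in> A" for a
  proof -
    have "((\<lambda>i. a o\<^sub>L e i) \<longlongrightarrow> a o\<^sub>L u) (netF I le)"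
      by (intro bounded_bilinear.tendsto[OF bounded_bilinear_blinfun_compose] tendsto_const uF)
    moreover have "((\<lambda>i. a o\<^sub>L e i) \<longlongrightarrow> a) (netF I le)"
      using conv that net_tendsto_iff[OF d] by blast
    ultimately show ?thesis using tendsto_unique[OF nb] by blast
  qed
  have nu1: "norm u \<le> 1"
    by (rule tendsto_upperbound[OF tendsto_norm[OF uF] evN nb])
  obtain a where a: "a \<in> A" "a \<noteq> 0" using assms(2) clA assms(1)
    unfolding operator_algebra_def by blast
  have "u \<noteq> 0" using ru[OF a(1)] a(2) by auto
  then have nu0: "norm u > 0" by simp
  have uu: "u o\<^sub>L u = u" using ru uA by blast
  have "norm u \<le> norm u * norm u" using norm_blinfun_compose[of u u] uu by simp
  then have "1 \<le> norm u" using nu0 by simp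
  then have "norm u = 1" using nu1 by simp
  then show ?thesis using u uA ru by (auto simp: right_identity_def)
qed

end
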